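(* Let $\lambda>1$, $L=\ln\lambda$, and let $\alpha$ be Diophantine with constants $\kappa,\tau>0$. Fix $\Gamma$ with $L<\Gamma\le 2L$. For $n\in\mathbb{Z}$ let $$\Theta_1=\{\theta\in[0,1]:\ e^{-2\Gamma|n|}\le|\sin\pi(2\theta+n\alpha)|\le e^{-\Gamma|n|}\},$$ $$\Theta_2=\{\theta\in[0,1]:\ \text{there exists } k\in\mathbb{Z},\ |k|\ge 1000|n|,\ \text{with } |\sin\pi(2\theta+k\alpha)|\le e^{-\frac{L}{100}|k|}\},$$ and $\Theta=\Theta_1\setminus\Theta_2$. Then there is a constant $C=C(\kappa,\tau)$ such that, for $|n|$ sufficiently large, for every $\theta\in\Theta$ and every $m>C|n|$, $$\min_{|x|\le m}|\sin\pi(2\theta+x\alpha)|\ge e^{-\frac{L}{100}|m|}.$$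
   Context: The frequency $\alpha$ is Diophantine with constants $\kappa,\tau>0$ if $\|k\alpha\|_{\mathbb{R}/\mathbb{Z}}\ge \tau/|k|^{\kappa}$ for all integers $k\neq 0$, where $\|x\|_{\mathbb{R}/\mathbb{Z}}=\inf_{j\in\mathbb{Z}}|x-j|$. The minimum is over integers $x$. *)

theory Defs
  imports Complex_Main
begin

definition dist_Z :: "real \<Rightarrow> real" where
  "dist_Z x = (INF j::int. \<bar>x - of_int j\<bar>)"

definition diophantine :: "real \<Rightarrow> real \<Rightarrow> real \<Rightarrow> bool" where
  "diophantine \<kappa> \<tau> \<alpha> \<longleftrightarrow>
     (\<forall>k::int. k \<noteq> 0 \<longrightarrow> dist_Z (of_int k * \<alpha>) \<ge> \<tau> / \<bar>of_int k\<bar> powr \<kappa>)"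

definition Theta1 :: "real \<Rightarrow> real \<Rightarrow> int \<Rightarrow> real set" where
  "Theta1 \<Gamma> \<alpha> n = {\<theta> \<in> {0..1}.
      exp (-2 * \<Gamma> * \<bar>of_int n\<bar>) \<le> \<bar>sin (pi * (2 * \<theta> + of_int n * \<alpha>))\<bar> \<and>
      \<bar>sin (pi * (2 * \<theta> + of_int n * \<alpha>))\<bar> \<le> exp (- \<Gamma> * \<bar>of_int n\<bar>)}"

definition Theta2 :: "real \<Rightarrow> real \<Rightarrow> int \<Rightarrow> real set" where
  "Theta2 L \<alpha> n = {\<theta> \<in> {0..1}. \<exists>k::int. \<bar>k\<bar> \<ge> 1000 * \<bar>n\<bar> \<and>
      \<bar>sin (pi * (2 * \<theta> + of_int k * \<alpha>))\<bar> \<le> exp (- (L / 100) * \<bar>of_int k\<bar>)}"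

end

theory Submission
  imports Defs "HOL-Real_Asymp.Real_Asymp"
begin

lemma sin_lower: fixes x::real assumes "0 \<le> x" "x \<le> 2" shows "x / 3 \<le> sin x"
proof -
  have "\<bar>sin x - (\<Sum>m<3. sin_coeff m * x ^ m)\<bar> \<le> inverse (fact 3) * \<bar>x\<bar> ^ 3"
    by (rule Maclaurin_sin_bound)
  hence "\<bar>sin x - x\<bar> \<le> x^3/6" using assms by (simp add: eval_nat_numeral sin_coeff_def fact_numeral)
  moreover have "x^2 \<le> 2^2" using power_mono[OF assms(2) assms(1), of 2] .
  hence "x^2 \<le> 4" by simp
  hence "x^3 \<le> 4 * x" using assms
    by (metis mult_right_mono power2_eq_square power3_eq_cube) 
  ultimately show ?thesis by linarith
qed

lemma L1: fixes t::real assumes "\<bar>t\<bar> \<le> 1/2" shows "(2/3) * \<bar>t\<bar> \<le> \<bar>sin (pi * t)\<bar>"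
proof -
  have tpi: "pi * \<bar>t\<bar> \<le> pi * (1/2)" using assms by (intro mult_left_mono) auto
  have "(2/3) * \<bar>t\<bar> \<le> sin (pi * \<bar>t\<bar>)"
  proof -
    have "pi * \<bar>t\<bar> \<le> 2" using tpi pi_less_4 by linarith
    hence "pi * \<bar>t\<bar> / 3 \<le> sin (pi * \<bar>t\<bar>)" by (intro sin_lower) auto
    moreover have "2 * \<bar>t\<bar> \<le> pi * \<bar>t\<bar>" using pi_ge_two by (intro mult_right_mono) auto
    ultimately show ?thesis by linarith
  qed
  also have "\<dots> = \<bar>sin (pi * t)\<bar>"
  proof -
    have nn: "0 \<le> sin (pi * \<bar>t\<bar>)" using tpi by (intro sin_ge_zero) auto
    show ?thesis
    proof (cases "t \<ge> 0")
      case True then show ?thesis using nn by simp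
    next
      case False
      hence "sin (pi * \<bar>t\<bar>) = - sin (pi * t)" by (simp add: sin_minus)
      then show ?thesis using nn by simp
    qed
  qed
  finally show ?thesis .
qed

lemma L2: "\<bar>sin (pi * (y + of_int j))\<bar> = \<bar>sin (pi * y)\<bar>"
  by (simp add: distrib_left sin_add sin_int_times_real cos_int_times_real mult.commute)

lemma L3: "(2/3) * \<bar>y - of_int (round y)\<bar> \<le> \<bar>sin (pi * y)\<bar>"
proof -
  have "\<bar>y - of_int (round y)\<bar> \<le> 1/2" using of_int_round_abs_le[of y] by linarith
  hence "(2/3) * \<bar>y - of_int (round y)\<bar> \<le> \<bar>sin (pi * (y - of_int (round y)))\<bar>" by (rule L1)
  also have "\<dots> = \<bar>sin (pi * y)\<bar>"
    using L2[of "y - of_int (round y)" "round y"] by simp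
  finally show ?thesis .
qed

lemma L4: "dist_Z y \<le> \<bar>y - of_int j\<bar>"
  unfolding dist_Z_def
  by (rule cINF_lower) (auto intro: bdd_belowI[where m=0])

lemma L5:
  assumes "diophantine \<kappa> \<tau> \<alpha>" "k \<noteq> 0" "u - v = of_int k * \<alpha>"
  shows "(2/3) * (\<tau> / \<bar>of_int k\<bar> powr \<kappa>) \<le> \<bar>sin (pi * u)\<bar> + \<bar>sin (pi * v)\<bar>"
proof -
  have "(2/3) * (\<tau> / \<bar>of_int k\<bar> powr \<kappa>) \<le> (2/3) * dist_Z (of_int k * \<alpha>)"
    using assms unfolding diophantine_def by auto
  also have "\<dots> \<le> (2/3) * \<bar>of_int k * \<alpha> - of_int (round u - round v)\<bar>" using L4[of _ "round u - round v"] by simp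
  also have "\<dots> \<le> (2/3) * \<bar>u - of_int (round u)\<bar> + (2/3) * \<bar>v - of_int (round v)\<bar>"
  proof -
    have e: "of_int k * \<alpha> - of_int (round u - round v) = (u - of_int (round u)) - (v - of_int (round v))"
      using assms(3) by simp
    show ?thesis unfolding e using mult_left_mono[OF abs_triangle_ineq4[of "u - of_int (round u)" "v - of_int (round v)"], of "2/3"] by (simp add: distrib_left)
  qed
  also have "\<dots> \<le> \<bar>sin (pi * u)\<bar> + \<bar>sin (pi * v)\<bar>" using L3[of u] L3[of v] by linarith
  finally show ?thesis .
qed

lemma asym:
  fixes L \<kappa> :: real assumes "L > 0" "\<kappa> > 0"
  shows "((\<lambda>x. 3 * exp (-L * x) * (1001 * x) powr \<kappa>) \<longlongrightarrow> 0) at_top"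
  using assms by real_asymp

theorem lemma4p2:
  fixes \<kappa> \<tau> :: real
  assumes "\<kappa> > 0" and "\<tau> > 0"
  shows "\<exists>C::real. \<forall>lam \<alpha> \<Gamma> :: real.
           lam > 1 \<longrightarrow> diophantine \<kappa> \<tau> \<alpha> \<longrightarrow>
           ln lam < \<Gamma> \<longrightarrow> \<Gamma> \<le> 2 * ln lam \<longrightarrow>
           (\<exists>N::int. \<forall>n::int. \<bar>n\<bar> \<ge> N \<longrightarrow>
              (\<forall>\<theta> \<in> Theta1 \<Gamma> \<alpha> n - Theta2 (ln lam) \<alpha> n.
                 \<forall>m::int. real_of_int m > C * \<bar>of_int n\<bar> \<longrightarrow>
                   Min ((\<lambda>x::int. \<bar>sin (pi * (2 * \<theta> + of_int x * \<alpha>))\<bar>) ` {x. \<bar>x\<bar> \<le> m})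
                     \<ge> exp (- (ln lam / 100) * \<bar>of_int m\<bar>)))"
proof (intro exI[of _ "1000::real"] allI impI)
  fix lam \<alpha> \<Gamma> :: real
  assume lam: "lam > 1" and dio: "diophantine \<kappa> \<tau> \<alpha>" and G1: "ln lam < \<Gamma>" and G2: "\<Gamma> \<le> 2 * ln lam"
  define L where "L = ln lam"
  have L0: "L > 0" using lam by (simp add: L_def)
  have "eventually (\<lambda>x. 3 * exp (-L * x) * (1001 * x) powr \<kappa> < \<tau>) at_top"
    using order_tendstoD(2)[OF asym[OF L0 assms(1)] assms(2)] .
  then obtain N0 :: real where N0: "\<And>x. x \<ge> N0 \<Longrightarrow> 3 * exp (-L * x) * (1001 * x) powr \<kappa> < \<tau>"
    by (auto simp: eventually_at_top_linorder)
  show "\<exists>N::int. \<forall>n::int. \<bar>n\<bar> \<ge> N \<longrightarrow>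
              (\<forall>\<theta> \<in> Theta1 \<Gamma> \<alpha> n - Theta2 (ln lam) \<alpha> n.
                 \<forall>m::int. real_of_int m > 1000 * \<bar>of_int n\<bar> \<longrightarrow>
                   Min ((\<lambda>x::int. \<bar>sin (pi * (2 * \<theta> + of_int x * \<alpha>))\<bar>) ` {x. \<bar>x\<bar> \<le> m})
                     \<ge> exp (- (ln lam / 100) * \<bar>of_int m\<bar>))"
  proof (intro exI[of _ "max 1 (ceiling N0)"] allI impI ballI)
    fix n :: int and \<theta> :: real and m :: int
    assume n: "\<bar>n\<bar> \<ge> max 1 (ceiling N0)"
      and th: "\<theta> \<in> Theta1 \<Gamma> \<alpha> n - Theta2 (ln lam) \<alpha> n"
      and m: "real_of_int m > 1000 * \<bar>of_int n\<bar>"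
    define a where "a = \<bar>real_of_int n\<bar>"
    have n1: "1 \<le> \<bar>n\<bar>" and nN: "ceiling N0 \<le> \<bar>n\<bar>" using n by auto
    have "real_of_int 1 \<le> real_of_int \<bar>n\<bar>" using n1 by (simp only: of_int_le_iff)
    hence a1: "a \<ge> 1" by (simp add: a_def)
    have "real_of_int (ceiling N0) \<le> real_of_int \<bar>n\<bar>" using nN by (simp only: of_int_le_iff)
    moreover have "real_of_int \<bar>n\<bar> = a" by (simp add: a_def)
    ultimately have aN: "a \<ge> N0" using le_of_int_ceiling[of N0] by linarith
    have keyA: "3 * exp (-L * a) * (1001 * a) powr \<kappa> < \<tau>" using N0 aN by blast
    have mr: "real_of_int m > 1000 * a" using m by (simp add: a_def)
    have mpos: "m > 0" using mr a1 by simp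
    have mabs: "\<bar>real_of_int m\<bar> = real_of_int m" using mpos by simp
    have th1: "\<theta> \<in> Theta1 \<Gamma> \<alpha> n" and th2: "\<theta> \<notin> Theta2 (ln lam) \<alpha> n" using th by auto
    have th01: "\<theta> \<in> {0..1}" and
      t1: "exp (-2 * \<Gamma> * a) \<le> \<bar>sin (pi * (2 * \<theta> + of_int n * \<alpha>))\<bar>" and
      t2: "\<bar>sin (pi * (2 * \<theta> + of_int n * \<alpha>))\<bar> \<le> exp (- \<Gamma> * a)"
      using th1 unfolding Theta1_def a_def by auto
    have t3: "\<bar>sin (pi * (2 * \<theta> + of_int k * \<alpha>))\<bar> > exp (- (L / 100) * \<bar>of_int k\<bar>)"
      if hk: "\<bar>k\<bar> \<ge> 1000 * \<bar>n\<bar>" for k :: int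
    proof (rule ccontr)
      assume "\<not> ?thesis"
      hence "\<bar>sin (pi * (2 * \<theta> + of_int k * \<alpha>))\<bar> \<le> exp (- (ln lam / 100) * \<bar>of_int k\<bar>)"
        by (simp add: L_def)
      hence "\<theta> \<in> Theta2 (ln lam) \<alpha> n" unfolding Theta2_def using th01 hk by blast
      thus False using th2 by blast
    qed
    define E where "E = exp (- (ln lam / 100) * \<bar>of_int m\<bar>)"
    have E: "E = exp (- (L / 100) * real_of_int m)" using mabs by (simp add: E_def L_def)
    have fin: "finite {x::int. \<bar>x\<bar> \<le> m}"
      by (rule finite_subset[of _ "{-m..m}"]) auto
    have "(0::int) \<in> {x::int. \<bar>x\<bar> \<le> m}" using mpos by simp
    hence ne: "{x::int. \<bar>x\<bar> \<le> m} \<noteq> {}" by blast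
    have "\<forall>x\<in>{x::int. \<bar>x\<bar> \<le> m}. E \<le> \<bar>sin (pi * (2 * \<theta> + of_int x * \<alpha>))\<bar>"
    proof
      fix x :: int assume "x \<in> {x::int. \<bar>x\<bar> \<le> m}"
      hence xm: "\<bar>x\<bar> \<le> m" by simp
      hence xmr: "\<bar>real_of_int x\<bar> \<le> real_of_int m" by linarith
      consider "\<bar>x\<bar> \<ge> 1000 * \<bar>n\<bar>" | "x = n" | "\<bar>x\<bar> < 1000 * \<bar>n\<bar>" "x \<noteq> n" by linarith
      then show "E \<le> \<bar>sin (pi * (2 * \<theta> + of_int x * \<alpha>))\<bar>"
      proof cases
        case 1
        have "(L / 100) * \<bar>real_of_int x\<bar> \<le> (L / 100) * real_of_int m"
          using xmr L0 by (intro mult_left_mono) auto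
        hence "E \<le> exp (- (L / 100) * \<bar>of_int x\<bar>)" unfolding E by simp
        then show ?thesis using t3[OF 1] by linarith
      next
        case 2
        have "2 * \<Gamma> * a \<le> 4 * L * a" using G2 a1 by (simp add: L_def mult_right_mono)
        also have "\<dots> \<le> (L/100) * real_of_int m"
        proof -
          have "400 * a \<le> real_of_int m" using mr a1 by linarith
          hence "L * (400 * a) \<le> L * real_of_int m" using L0 by (intro mult_left_mono) auto
          thus ?thesis by simp
        qed
        finally have "-2 * \<Gamma> * a \<ge> - (L / 100) * real_of_int m" by linarith
        hence "E \<le> exp (-2 * \<Gamma> * a)" unfolding E by simp
        then show ?thesis using t1 2 by simp
      next
        case 3
        define k where "k = x - n"
        have k0: "k \<noteq> 0" using 3 by (simp add: k_def)
        have kb: "\<bar>real_of_int k\<bar> \<le> 1001 * a" using 3 unfolding k_def a_def by linarith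
        have kpos: "\<bar>real_of_int k\<bar> > 0" using k0 by simp
        have "(2/3) * (\<tau> / \<bar>of_int k\<bar> powr \<kappa>) \<le> \<bar>sin (pi * (2 * \<theta> + of_int x * \<alpha>))\<bar> + \<bar>sin (pi * (2 * \<theta> + of_int n * \<alpha>))\<bar>"
          by (rule L5[OF dio k0]) (simp add: k_def algebra_simps)
        moreover have "\<tau> / (1001 * a) powr \<kappa> \<le> \<tau> / \<bar>of_int k\<bar> powr \<kappa>"
        proof (rule divide_left_mono)
          show "\<bar>real_of_int k\<bar> powr \<kappa> \<le> (1001 * a) powr \<kappa>" using kb kpos assms(1) by (intro powr_mono2) auto
          show "0 \<le> \<tau>" using assms by simp
          show "0 < (1001 * a) powr \<kappa> * \<bar>real_of_int k\<bar> powr \<kappa>" using kpos a1 by simp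
        qed
        moreover have "2 * exp (-L * a) \<le> (2/3) * (\<tau> / (1001 * a) powr \<kappa>)"
        proof -
          have p: "(1001 * a) powr \<kappa> > 0" using a1 by simp
          have "3 * exp (-L * a) \<le> \<tau> / (1001 * a) powr \<kappa>"
            using keyA p by (simp add: pos_le_divide_eq)
          thus ?thesis by simp
        qed
        moreover have "exp (- \<Gamma> * a) \<le> exp (-L * a)" using G1 a1 by (simp add: L_def)
        moreover have "E \<le> exp (-L * a)"
        proof -
          have "100 * a \<le> real_of_int m" using mr a1 by linarith
          hence "L * (100 * a) \<le> L * real_of_int m" using L0 by (intro mult_left_mono) auto
          thus ?thesis unfolding E by simp
        qed
        ultimately show ?thesis using t2 by linarith
      qed
    qed
    then show "Min ((\<lambda>x::int. \<bar>sin (pi * (2 * \<theta> + of_int x * \<alpha>))\<bar>) ` {x. \<bar>x\<bar> \<le> m})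
                     \<ge> exp (- (ln lam / 100) * \<bar>of_int m\<bar>)"
      unfolding E_def[symmetric] using fin ne by (simp add: Min_ge_iff)
  qed
qed

end
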